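(* For any hypothesis class $\mathcal{H}\subseteq\{0,1\}^{\mathcal{X}}$, as a function of the time horizon $T$, $$\inf_{\mathcal{A}}\operatorname{M}_{\mathcal{A}}(T,\mathcal{H}) = \begin{cases}\Theta(1), & \text{if } \operatorname{W}(\mathcal{H})=1,\\ \Theta(\sqrt{T}), & \text{if } 2\le \operatorname{W}(\mathcal{H})<\infty,\\ \Theta(T), & \text{if } \operatorname{W}(\mathcal{H})=\infty,\end{cases}$$ where the infimum is over all (possibly randomized) online learners operating under apple tasting feedback.
   Context: Online binary classification: over rounds $t=1,\dots,T$, an adversary picks $(x_t,y_t)\in\mathcal{X}\times\{0,1\}$ and reveals $x_t$; the learner $\mathcal{A}$ (possibly randomized) outputs $\hat y_t=\mathcal{A}(x_t)\in\{0,1\}$ based on the history; under apple tasting feedback the learner observes $y_t$ only if $\hat y_t=1$. $\operatorname{M}_{\mathcal{A}}(T,\mathcal{H}) := \sup_{h\in\mathcal{H}}\sup_{x_1,\dots,x_T}\mathbb{E}\bigl[\sum_{t=1}^T \mathbb{1}\{\mathcal{A}(x_t)\neq h(x_t)\}\bigr]$ (labels $y_t=h(x_t)$, expectation over the learner's randomness). AL tree of width $w\in\mathbb{N}=\{1,2,\dots\}$ and depth $d$: a binary string $u$ is an internal node if $|u|<d$ and $u$ has fewer than $w$ ones; the tree assigns $x_u\in\mathcal{X}$ to each internal node. A path is a binary string $\sigma$ whose proper prefixes are all internal nodes but which is not itself one. The tree is shattered by $\mathcal{H}$ if for every path $\sigma$ some $h\in\mathcal{H}$ satisfies $h(x_{(\sigma_1,\dots,\sigma_{i-1})})=\sigma_i$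 for all $i\le|\sigma|$. $\operatorname{AL}_w(\mathcal{H})$ is the largest $d$ such that such a tree of width $w$ and depth $d$ is shattered ($\infty$ if unbounded, $0$ if none). The Effective width $\operatorname{W}(\mathcal{H})$ is the smallest $w\in\mathbb{N}$ with $\operatorname{AL}_w(\mathcal{H})<\infty$, and $\infty$ if none exists. *)

theory Defs
  imports Complex_Main "HOL-Library.Extended_Nat" "HOL-Library.Landau_Symbols"
begin

text \<open>Labels are encoded as bool (True = 1, False = 0).  A history entry records
  the revealed instance, the learner's prediction, and the feedback it received:
  Some y if the prediction was 1 (True), None otherwise.\<close>

type_synonym 'x hist = "('x \<times> bool \<times> bool option) list"

text \<open>A (possibly randomized) learner in behavioural form: given the history and the
  current instance, the probability with which it predicts 1.\<close>

type_synonym 'x learner = "'x hist \<Rightarrow> 'x \<Rightarrow> real"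

definition valid_learner :: "'x learner \<Rightarrow> bool" where
  "valid_learner A \<longleftrightarrow> (\<forall>hs x. 0 \<le> A hs x \<and> A hs x \<le> 1)"

fun exp_mistakes :: "'x learner \<Rightarrow> ('x \<Rightarrow> bool) \<Rightarrow> 'x hist \<Rightarrow> 'x list \<Rightarrow> real" where
  "exp_mistakes A h hs [] = 0"
| "exp_mistakes A h hs (x # xs) =
     A hs x * ((if h x then 0 else 1) + exp_mistakes A h (hs @ [(x, True, Some (h x))]) xs)
   + (1 - A hs x) * ((if h x then 1 else 0) + exp_mistakes A h (hs @ [(x, False, None)]) xs)"

definition mistake_bound :: "'x learner \<Rightarrow> nat \<Rightarrow> ('x \<Rightarrow> bool) set \<Rightarrow> real" where
  "mistake_bound A T H = (SUP p \<in> {(h, xs). h \<in> H \<and> length xs = T}. exp_mistakes A (fst p) [] (snd p))"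

definition opt_mistakes :: "nat \<Rightarrow> ('x \<Rightarrow> bool) set \<Rightarrow> real" where
  "opt_mistakes T H = (INF A \<in> {A. valid_learner A}. mistake_bound A T H)"

definition internal_node :: "nat \<Rightarrow> nat \<Rightarrow> bool list \<Rightarrow> bool" where
  "internal_node w d u \<longleftrightarrow> length u < d \<and> length (filter id u) < w"

definition is_path :: "nat \<Rightarrow> nat \<Rightarrow> bool list \<Rightarrow> bool" where
  "is_path w d \<sigma> \<longleftrightarrow> (\<forall>i < length \<sigma>. internal_node w d (take i \<sigma>)) \<and> \<not> internal_node w d \<sigma>"

definition AL_shattered :: "('x \<Rightarrow> bool) set \<Rightarrow> nat \<Rightarrow> nat \<Rightarrow> (bool list \<Rightarrow> 'x) \<Rightarrow> bool" where
  "AL_shattered H w d X \<longleftrightarrow>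
     (\<forall>\<sigma>. is_path w d \<sigma> \<longrightarrow> (\<exists>h\<in>H. \<forall>i < length \<sigma>. h (X (take i \<sigma>)) = \<sigma> ! i))"

definition AL_dim :: "nat \<Rightarrow> ('x \<Rightarrow> bool) set \<Rightarrow> enat" where
  "AL_dim w H = Sup {enat d | d. \<exists>X. AL_shattered H w d X}"

definition eff_width :: "('x \<Rightarrow> bool) set \<Rightarrow> enat" where
  "eff_width H = Inf {enat w | w. 1 \<le> w \<and> AL_dim w H < \<infinity>}"

end

theory Submission
  imports Defs
begin


lemma em_nonneg: "valid_learner A \<Longrightarrow> 0 \<le> exp_mistakes A h hs xs"
proof (induction xs arbitrary: hs)
  case Nil then show ?case by simp
next
  case (Cons x xs)
  have a: "0 \<le> A hs x" "A hs x \<le> 1" using Cons.prems by (auto simp: valid_learner_def)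
  have "0 \<le> exp_mistakes A h (hs @ [(x, True, Some (h x))]) xs"
       "0 \<le> exp_mistakes A h (hs @ [(x, False, None)]) xs" using Cons by auto
  then show ?case using a by (simp add: add_nonneg_nonneg mult_nonneg_nonneg)
qed

lemma em_le_len: "valid_learner A \<Longrightarrow> exp_mistakes A h hs xs \<le> length xs"
proof (induction xs arbitrary: hs)
  case Nil then show ?case by simp
next
  case (Cons x xs)
  have a: "0 \<le> A hs x" "A hs x \<le> 1" using Cons.prems by (auto simp: valid_learner_def)
  have b: "exp_mistakes A h (hs @ [(x, True, Some (h x))]) xs \<le> length xs"
       "exp_mistakes A h (hs @ [(x, False, None)]) xs \<le> length xs" using Cons by auto
  have "A hs x * ((if h x then 0 else 1) + exp_mistakes A h (hs @ [(x, True, Some (h x))]) xs)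
        \<le> A hs x * (1 + real (length xs))"
    using a b by (intro mult_left_mono) auto
  moreover have "(1 - A hs x) * ((if h x then 1 else 0) + exp_mistakes A h (hs @ [(x, False, None)]) xs)
        \<le> (1 - A hs x) * (1 + real (length xs))"
    using a b by (intro mult_left_mono) auto
  ultimately show ?case by (simp add: algebra_simps)
qed

lemma em_append_mono: "valid_learner A \<Longrightarrow> exp_mistakes A h hs xs \<le> exp_mistakes A h hs (xs @ ys)"
proof (induction xs arbitrary: hs)
  case Nil then show ?case using em_nonneg by simp
next
  case (Cons x xs)
  have a: "0 \<le> A hs x" "A hs x \<le> 1" using Cons.prems by (auto simp: valid_learner_def)
  have b: "exp_mistakes A h (hs @ [(x, True, Some (h x))]) xs \<le> exp_mistakes A h (hs @ [(x, True, Some (h x))]) (xs@ys)"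
       "exp_mistakes A h (hs @ [(x, False, None)]) xs \<le> exp_mistakes A h (hs @ [(x, False, None)]) (xs@ys)" using Cons by auto
  show ?case using mult_left_mono[OF b(1) a(1)] mult_left_mono[OF b(2), of "1 - A hs x"] a
    by (simp add: algebra_simps)
qed

lemma mb_upper:
  assumes "valid_learner A" "h \<in> H" "length xs = T"
  shows "exp_mistakes A h [] xs \<le> mistake_bound A T H"
  unfolding mistake_bound_def
proof (rule cSUP_upper2[where x="(h,xs)"])
  show "bdd_above ((\<lambda>p. exp_mistakes A (fst p) [] (snd p)) ` {(h, xs). h \<in> H \<and> length xs = T})"
    using em_le_len[OF assms(1)] by (intro bdd_aboveI[where M="real T"]) auto
qed (use assms in auto)

lemma mb_least:
  assumes "H \<noteq> {}" "\<And>h xs. h \<in> H \<Longrightarrow> length xs = T \<Longrightarrow> exp_mistakes A h [] xs \<le> B"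
  shows "mistake_bound A T H \<le> B"
  unfolding mistake_bound_def
proof (rule cSUP_least)
  obtain h where "h \<in> H" using assms by auto
  then have "(h, replicate T undefined) \<in> {(h, xs). h \<in> H \<and> length xs = T}" by simp
  then show "{(h, xs). h \<in> H \<and> length xs = T} \<noteq> {}" by blast
qed (use assms in auto)

lemma mb_nonneg:
  assumes "valid_learner A" "H \<noteq> {}"
  shows "0 \<le> mistake_bound A T H"
proof -
  obtain h where "h \<in> H" using assms by auto
  then show ?thesis using mb_upper[OF assms(1), of h H "replicate T undefined" T] em_nonneg[OF assms(1)]
    by (meson length_replicate order_trans)
qed

lemma valid_zero: "valid_learner (\<lambda>_ _. 0)" by (simp add: valid_learner_def)

lemma opt_le:
  assumes "valid_learner A" "H \<noteq> {}"
  shows "opt_mistakes T H \<le> mistake_bound A T H"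
  unfolding opt_mistakes_def
  by (rule cINF_lower) (use assms mb_nonneg in \<open>auto intro!: bdd_belowI[where m=0]\<close>)

lemma opt_ge:
  assumes "\<And>A. valid_learner A \<Longrightarrow> B \<le> mistake_bound A T H"
  shows "B \<le> opt_mistakes T H"
  unfolding opt_mistakes_def
  by (rule cINF_greatest) (use assms valid_zero in auto)


lemma path_len_le:
  assumes "is_path w d \<sigma>" shows "length \<sigma> \<le> d"
proof (cases \<sigma> rule: rev_cases)
  case (snoc ys y)
  then have "internal_node w d (take (length ys) \<sigma>)" using assms unfolding is_path_def by auto
  then show ?thesis using snoc by (simp add: internal_node_def)
qed simp

lemma filter_take_le: "length (filter id (take i s)) \<le> length (filter id s)"
proof -
  have "length (filter id s) = length (filter id (take i s)) + length (filter id (drop i s))"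
    by (metis append_take_drop_id filter_append length_append)
  then show ?thesis by simp
qed

lemma shatter_trunc:
  assumes "AL_shattered H w d X" "d' \<le> d"
  shows "AL_shattered H w d' X"
  unfolding AL_shattered_def
proof (intro allI impI)
  fix \<sigma> assume p: "is_path w d' \<sigma>"
  have len: "length \<sigma> \<le> d'" using path_len_le[OF p] .
  have pre: "\<forall>i<length \<sigma>. internal_node w d' (take i \<sigma>)" and ni: "\<not> internal_node w d' \<sigma>"
    using p by (auto simp: is_path_def)
  show "\<exists>h\<in>H. \<forall>i<length \<sigma>. h (X (take i \<sigma>)) = \<sigma> ! i"
  proof (cases "length (filter id \<sigma>) < w")
    case False
    have "is_path w d \<sigma>" unfolding is_path_def
      using pre False assms(2) by (auto simp: internal_node_def)
    then show ?thesis using assms(1) by (auto simp: AL_shattered_def)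
  next
    case True
    then have ld: "length \<sigma> = d'" using ni len by (auto simp: internal_node_def)
    define \<tau> where "\<tau> = \<sigma> @ replicate (d - d') False"
    have lt: "length \<tau> = d" using ld assms(2) by (simp add: \<tau>_def)
    have ft: "length (filter id \<tau>) = length (filter id \<sigma>)" by (simp add: \<tau>_def)
    have "is_path w d \<tau>" unfolding is_path_def
    proof (intro conjI allI impI)
      fix i assume "i < length \<tau>"
      then show "internal_node w d (take i \<tau>)"
        using filter_take_le[of i \<tau>] ft True lt by (auto simp: internal_node_def)
    qed (use lt in \<open>auto simp: internal_node_def\<close>)
    then obtain h where h: "h \<in> H" "\<forall>i<length \<tau>. h (X (take i \<tau>)) = \<tau> ! i"
      using assms(1) by (auto simp: AL_shattered_def)
    have "\<forall>i<length \<sigma>. h (X (take i \<sigma>)) = \<sigma> ! i"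
    proof (intro allI impI)
      fix i assume i: "i < length \<sigma>"
      then have "take i \<tau> = take i \<sigma>" "\<tau> ! i = \<sigma> ! i" by (auto simp: \<tau>_def nth_append)
      then show "h (X (take i \<sigma>)) = \<sigma> ! i" using h i lt ld assms(2) by (metis le_trans less_le_trans order_refl)
    qed
    then show ?thesis using h by blast
  qed
qed



lemma shatter_mono: "AL_shattered V w d X \<Longrightarrow> V \<subseteq> V' \<Longrightarrow> AL_shattered V' w d X"
  unfolding AL_shattered_def by blast

lemma AL_dim_mono: "V \<subseteq> V' \<Longrightarrow> AL_dim w V \<le> AL_dim w V'"
  unfolding AL_dim_def by (rule Sup_subset_mono) (use shatter_mono in blast)

lemma shatter_le_dim: "AL_shattered V w k X \<Longrightarrow> enat k \<le> AL_dim w V"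
  unfolding AL_dim_def by (rule Sup_upper) blast

lemma shatter_zero: "V \<noteq> {} \<Longrightarrow> AL_shattered V w 0 X"
  unfolding AL_shattered_def is_path_def internal_node_def by auto

lemma shatter_width0: "V \<noteq> {} \<Longrightarrow> AL_shattered V 0 k X"
  unfolding AL_shattered_def
proof (intro allI impI)
  fix \<sigma> assume V: "V \<noteq> {}" and p: "is_path 0 k \<sigma>"
  show "\<exists>h\<in>V. \<forall>i<length \<sigma>. h (X (take i \<sigma>)) = \<sigma> ! i"
  proof (cases \<sigma>)
    case Nil then show ?thesis using V by auto
  next
    case (Cons a l)
    then have "internal_node 0 k (take 0 \<sigma>)" using p unfolding is_path_def by auto
    then show ?thesis by (simp add: internal_node_def)
  qed
qed

lemma dim_ge_ex:
  assumes "V \<noteq> {}" "enat k \<le> AL_dim w V"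
  shows "\<exists>X. AL_shattered V w k X"
proof (rule ccontr)
  assume na: "\<not> ?thesis"
  have k: "k > 0" using na shatter_zero[OF assms(1)] by (cases k) auto
  have "\<forall>d. (\<exists>X. AL_shattered V w d X) \<longrightarrow> d < k"
    using na shatter_trunc by (meson not_le)
  then have "AL_dim w V \<le> enat (k - 1)"
    unfolding AL_dim_def by (intro Sup_least) auto
  then have "enat k \<le> enat (k - 1)" using assms(2) by (rule order_trans[rotated])
  then show False using k by simp
qed

lemma dim_inf_ex:
  assumes "AL_dim w V = \<infinity>"
  shows "\<exists>X. AL_shattered V w k X"
proof -
  have "{enat d |d. \<exists>X. AL_shattered V w d X} \<noteq> {}"
    using assms unfolding AL_dim_def by (metis Sup_empty bot_enat_def infinity_ne_i0)
  then obtain d X where "AL_shattered V w d X" by blast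
  then have "AL_shattered V w 0 X" using shatter_trunc by blast
  moreover have "is_path w 0 []" by (simp add: is_path_def internal_node_def)
  ultimately have "V \<noteq> {}" unfolding AL_shattered_def by blast
  then show ?thesis using dim_ge_ex[of V k w] assms by simp
qed



definition combine :: "'x \<Rightarrow> (bool list \<Rightarrow> 'x) \<Rightarrow> (bool list \<Rightarrow> 'x) \<Rightarrow> bool list \<Rightarrow> 'x" where
  "combine x X0 X1 s = (case s of [] \<Rightarrow> x | b # s' \<Rightarrow> if b then X1 s' else X0 s')"

lemma internal_Cons:
  "internal_node w (Suc k) (b # v) \<longleftrightarrow> (if b then internal_node (w - 1) k v \<and> w \<ge> 1 else internal_node w k v)"
  by (auto simp: internal_node_def)

lemma path_Cons:
  assumes "w \<ge> 1"
  shows "is_path w (Suc k) (b # v) \<longleftrightarrow> is_path (if b then w - 1 else w) k v"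
proof -
  have "(\<forall>i<length (b # v). internal_node w (Suc k) (take i (b # v))) \<longleftrightarrow>
        (\<forall>i<length v. internal_node w (Suc k) (b # take i v))"
    using assms by (auto simp: internal_node_def less_Suc_eq_0_disj)
  then show ?thesis using assms unfolding is_path_def by (auto simp: internal_Cons)
qed



lemma combine_shatter:
  assumes "w \<ge> 1" "AL_shattered V0 w k X0" "AL_shattered V1 (w - 1) k X1"
    "V0 \<subseteq> {h \<in> V. \<not> h x}" "V1 \<subseteq> {h \<in> V. h x}"
  shows "AL_shattered V w (Suc k) (combine x X0 X1)"
  unfolding AL_shattered_def
proof (intro allI impI)
  fix \<sigma> assume p: "is_path w (Suc k) \<sigma>"
  then obtain b v where \<sigma>: "\<sigma> = b # v"
  proof (cases \<sigma>)
    case Nil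
    then have "\<not> internal_node w (Suc k) []" using p by (simp add: is_path_def)
    then show ?thesis using assms(1) by (simp add: internal_node_def)
  qed auto
  have pv: "is_path (if b then w - 1 else w) k v" using p path_Cons[OF assms(1)] \<sigma> by simp
  show "\<exists>h\<in>V. \<forall>i<length \<sigma>. h (combine x X0 X1 (take i \<sigma>)) = \<sigma> ! i"
  proof (cases b)
    case True
    then obtain h where h: "h \<in> V1" "\<forall>i<length v. h (X1 (take i v)) = v ! i"
      using assms(3) pv by (auto simp: AL_shattered_def)
    have "\<forall>i<length \<sigma>. h (combine x X0 X1 (take i \<sigma>)) = \<sigma> ! i"
    proof (intro allI impI)
      fix i assume "i < length \<sigma>"
      show "h (combine x X0 X1 (take i \<sigma>)) = \<sigma> ! i"
      proof (cases i)
        case 0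
        have "h x" using h(1) assms(5) by blast
        then show ?thesis using 0 True \<sigma> by (simp add: combine_def)
      next
        case (Suc j)
        then have "j < length v" using \<open>i < length \<sigma>\<close> \<sigma> by simp
        then have "h (X1 (take j v)) = v ! j" using h(2) by blast
        then show ?thesis using Suc True \<sigma> by (simp add: combine_def)
      qed
    qed
    then show ?thesis using h assms(5) by blast
  next
    case False
    then obtain h where h: "h \<in> V0" "\<forall>i<length v. h (X0 (take i v)) = v ! i"
      using assms(2) pv by (auto simp: AL_shattered_def)
    have "\<forall>i<length \<sigma>. h (combine x X0 X1 (take i \<sigma>)) = \<sigma> ! i"
    proof (intro allI impI)
      fix i assume "i < length \<sigma>"
      show "h (combine x X0 X1 (take i \<sigma>)) = \<sigma> ! i"
      proof (cases i)
        case 0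
        have "\<not> h x" using h(1) assms(4) by blast
        then show ?thesis using 0 False \<sigma> by (simp add: combine_def)
      next
        case (Suc j)
        then have "j < length v" using \<open>i < length \<sigma>\<close> \<sigma> by simp
        then have "h (X0 (take j v)) = v ! j" using h(2) by blast
        then show ?thesis using Suc False \<sigma> by (simp add: combine_def)
      qed
    qed
    then show ?thesis using h assms(4) by blast
  qed
qed




lemma key_split:
  assumes "V \<noteq> {}" "AL_dim u V = enat m" "u \<ge> 1"
    "{h \<in> V. \<not> h x} \<noteq> {}" "\<not> AL_dim u {h \<in> V. \<not> h x} < AL_dim u V"
    "{h \<in> V. h x} \<noteq> {}"
  shows "u \<ge> 2 \<and> AL_dim (u - 1) {h \<in> V. h x} < enat m"
proof (rule ccontr)
  assume na: "\<not> (u \<ge> 2 \<and> AL_dim (u - 1) {h \<in> V. h x} < enat m)"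
  have "enat m \<le> AL_dim u {h \<in> V. \<not> h x}" using assms(2,5) by (simp add: not_less)
  then obtain X0 where X0: "AL_shattered {h \<in> V. \<not> h x} u m X0"
    using dim_ge_ex[OF assms(4)] by blast
  have "\<exists>X1. AL_shattered {h \<in> V. h x} (u - 1) m X1"
  proof (cases "u \<ge> 2")
    case True
    then have "enat m \<le> AL_dim (u - 1) {h \<in> V. h x}" using na by (simp add: not_less)
    then show ?thesis using dim_ge_ex[OF assms(6)] by blast
  next
    case False
    then have "u - 1 = 0" by simp
    then show ?thesis using shatter_width0[OF assms(6), of m] by metis
  qed
  then obtain X1 where X1: "AL_shattered {h \<in> V. h x} (u - 1) m X1" by blast
  have "AL_shattered V u (Suc m) (combine x X0 X1)"
    by (rule combine_shatter[OF assms(3) X0 X1]) auto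
  then have "enat (Suc m) \<le> AL_dim u V" by (rule shatter_le_dim)
  then show False using assms(2) by simp
qed



definition condC :: "('x \<Rightarrow> bool) set \<Rightarrow> nat \<Rightarrow> 'x \<Rightarrow> bool" where
  "condC V u x \<longleftrightarrow> ({h \<in> V. \<not> h x} = {} \<or> AL_dim u {h \<in> V. \<not> h x} < AL_dim u V)"

definition stp :: "('x \<Rightarrow> bool) set \<times> nat \<Rightarrow> ('x \<times> bool \<times> bool option) \<Rightarrow> ('x \<Rightarrow> bool) set \<times> nat" where
  "stp s e = (case s of (V, u) \<Rightarrow> (case e of (x, pr, fb) \<Rightarrow>
     (if pr then (case fb of None \<Rightarrow> (V, u)
        | Some y \<Rightarrow> (if y then (if condC V u x then ({h \<in> V. h x}, u) else ({h \<in> V. h x}, u - 1))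
                   else ({h \<in> V. \<not> h x}, u)))
      else (V, u))))"

definition st :: "('x \<Rightarrow> bool) set \<Rightarrow> nat \<Rightarrow> 'x hist \<Rightarrow> ('x \<Rightarrow> bool) set \<times> nat" where
  "st H W hs = foldl stp (H, W) hs"

definition alg :: "('x \<Rightarrow> bool) set \<Rightarrow> nat \<Rightarrow> real \<Rightarrow> 'x learner" where
  "alg H W p hs x = (case st H W hs of (V, u) \<Rightarrow> if condC V u x then 1 else p)"

lemma valid_alg: "0 \<le> p \<Longrightarrow> p \<le> 1 \<Longrightarrow> valid_learner (alg H W p)"
  unfolding valid_learner_def alg_def by (auto split: prod.splits)

lemma st_snoc: "st H W (hs @ [e]) = stp (st H W hs) e"
  by (simp add: st_def)

lemma mix1: "p * (1 + X) + (1 - p) * X = p + (X::real)" by (simp add: algebra_simps)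

lemma mix2: "(p::real) > 0 \<Longrightarrow> p * (Y - 1 / p - 1) + (1 - p) * (1 + Y) = Y - 2 * p"
  by (simp add: algebra_simps)

lemma alg_bound:
  assumes p: "0 < p" "p \<le> 1"
  shows "st H W hs = (V, u) \<Longrightarrow> h \<in> V \<Longrightarrow> u \<ge> 1 \<Longrightarrow> AL_dim u V = enat m \<Longrightarrow>
    exp_mistakes (alg H W p) h hs xs \<le> real (u - 1) / p + real m + p * real (length xs)"
proof (induction xs arbitrary: hs V u m)
  case Nil
  then show ?case using p by simp
next
  case (Cons x xs)
  let ?A = "alg H W p"
  let ?L = "real (length xs)"
  define hs1 where "hs1 = hs @ [(x, True, Some (h x))]"
  define hs0 where "hs0 = hs @ [(x, False, None)]"
  have st0: "st H W hs0 = (V, u)" using Cons.prems by (simp add: hs0_def st_snoc stp_def)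
  have IH0: "exp_mistakes ?A h hs0 xs \<le> real (u - 1) / p + real m + p * ?L"
    using Cons.IH[OF st0] Cons.prems by blast
  have E: "exp_mistakes ?A h hs (x # xs) =
     ?A hs x * ((if h x then 0 else 1) + exp_mistakes ?A h hs1 xs)
   + (1 - ?A hs x) * ((if h x then 1 else 0) + exp_mistakes ?A h hs0 xs)"
    by (simp add: hs1_def hs0_def)
  have Vne: "V \<noteq> {}" using Cons.prems by auto
  have pL: "p * (1 + ?L) = p + p * ?L" by (simp add: algebra_simps)
  show ?case
  proof (cases "condC V u x")
    case C: True
    then have a: "?A hs x = 1" using Cons.prems by (simp add: alg_def)
    show ?thesis
    proof (cases "h x")
      case True
      have st1: "st H W hs1 = ({g \<in> V. g x}, u)" using Cons.prems C True by (simp add: hs1_def st_snoc stp_def)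
      have "AL_dim u {g \<in> V. g x} \<le> enat m" using AL_dim_mono[of "{g \<in> V. g x}" V u] Cons.prems by auto
      then obtain m1 where m1: "AL_dim u {g \<in> V. g x} = enat m1" "m1 \<le> m"
        using enat_ile by fastforce
      have I1: "exp_mistakes ?A h hs1 xs \<le> real (u - 1) / p + real m1 + p * ?L"
        using Cons.IH[OF st1 _ _ m1(1)] Cons.prems True by blast
      have "exp_mistakes ?A h hs (x # xs) = exp_mistakes ?A h hs1 xs" using E a True by simp
      then show ?thesis using I1 of_nat_mono[OF m1(2)] p pL by simp
    next
      case False
      have st1: "st H W hs1 = ({g \<in> V. \<not> g x}, u)" using Cons.prems False by (simp add: hs1_def st_snoc stp_def)
      have ne: "{g \<in> V. \<not> g x} \<noteq> {}" using Cons.prems False by auto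
      then have "AL_dim u {g \<in> V. \<not> g x} < AL_dim u V" using C unfolding condC_def by blast
      then have "AL_dim u {g \<in> V. \<not> g x} < enat m" using Cons.prems(4) by simp
      then obtain m0 where m0: "AL_dim u {g \<in> V. \<not> g x} = enat m0" "m0 < m"
        using less_enatE by blast
      have I1: "exp_mistakes ?A h hs1 xs \<le> real (u - 1) / p + real m0 + p * ?L"
        using Cons.IH[OF st1 _ _ m0(1)] Cons.prems False by blast
      have "exp_mistakes ?A h hs (x # xs) = 1 + exp_mistakes ?A h hs1 xs" using E a False by simp
      then show ?thesis using I1 of_nat_mono[of "Suc m0" m] m0(2) p pL by simp
    qed
  next
    case C: False
    then have a: "?A hs x = p" using Cons.prems by (simp add: alg_def)
    show ?thesis
    proof (cases "h x")
      case False
      have st1: "st H W hs1 = ({g \<in> V. \<not> g x}, u)" using Cons.prems False by (simp add: hs1_def st_snoc stp_def)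
      have "AL_dim u {g \<in> V. \<not> g x} \<le> enat m" using AL_dim_mono[of "{g \<in> V. \<not> g x}" V u] Cons.prems by auto
      then obtain m0 where m0: "AL_dim u {g \<in> V. \<not> g x} = enat m0" "m0 \<le> m"
        using enat_ile by fastforce
      have I1: "exp_mistakes ?A h hs1 xs \<le> real (u - 1) / p + real m0 + p * ?L"
        using Cons.IH[OF st1 _ _ m0(1)] Cons.prems False by blast
      have "exp_mistakes ?A h hs (x # xs) = p * (1 + exp_mistakes ?A h hs1 xs) + (1 - p) * exp_mistakes ?A h hs0 xs"
        using E a False by simp
      also have "\<dots> \<le> p * (1 + (real (u - 1) / p + real m + p * ?L)) + (1 - p) * (real (u - 1) / p + real m + p * ?L)"
        using I1 IH0 m0(2) p by (intro add_mono mult_left_mono) auto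
      also have "\<dots> = p + (real (u - 1) / p + real m + p * ?L)" by (rule mix1)
      finally show ?thesis by (simp add: algebra_simps)
    next
      case True
      have ne0: "{g \<in> V. \<not> g x} \<noteq> {}" and nl: "\<not> AL_dim u {g \<in> V. \<not> g x} < AL_dim u V"
        using C unfolding condC_def by blast+
      have ne1: "{g \<in> V. g x} \<noteq> {}" using True Cons.prems(2) by blast
      have ks: "u \<ge> 2 \<and> AL_dim (u - 1) {g \<in> V. g x} < enat m"
        by (rule key_split[OF Vne Cons.prems(4) Cons.prems(3) ne0 nl ne1])
      then obtain m1 where m1: "AL_dim (u - 1) {g \<in> V. g x} = enat m1" "m1 < m"
        using less_enatE by blast
      have st1: "st H W hs1 = ({g \<in> V. g x}, u - 1)" using Cons.prems C True by (simp add: hs1_def st_snoc stp_def)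
      have I1: "exp_mistakes ?A h hs1 xs \<le> real (u - 1 - 1) / p + real m1 + p * ?L"
      proof (rule Cons.IH[OF st1 _ _ m1(1)])
        show "h \<in> {g \<in> V. g x}" using True Cons.prems(2) by blast
        show "1 \<le> u - 1" using ks by linarith
      qed
      have r: "real (u - 1 - 1) = real (u - 1) - 1" using ks by simp
      have "exp_mistakes ?A h hs (x # xs) = p * exp_mistakes ?A h hs1 xs + (1 - p) * (1 + exp_mistakes ?A h hs0 xs)"
        using E a True by simp
      also have "\<dots> \<le> p * ((real (u - 1) - 1) / p + (real m - 1) + p * ?L) + (1 - p) * (1 + (real (u - 1) / p + real m + p * ?L))"
        using I1 IH0 m1(2) p r by (intro add_mono mult_left_mono) auto
      also have "\<dots> = p * ((real (u - 1) / p + real m + p * ?L) - 1 / p - 1) + (1 - p) * (1 + (real (u - 1) / p + real m + p * ?L))"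
        by (simp add: diff_divide_distrib algebra_simps)
      also have "\<dots> = real (u - 1) / p + real m + p * ?L - 2 * p"
        by (rule mix2[OF p(1)])
      finally show ?thesis using p by (simp add: algebra_simps)
    qed
  qed
qed

lemma alg_mb:
  assumes "0 < p" "p \<le> 1" "H \<noteq> {}" "W \<ge> 1" "AL_dim W H = enat d"
  shows "mistake_bound (alg H W p) T H \<le> real (W - 1) / p + real d + p * real T"
proof (rule mb_least[OF assms(3)])
  fix h :: "'a \<Rightarrow> bool" and xs :: "'a list" assume "h \<in> H" "length xs = T"
  then show "exp_mistakes (alg H W p) h [] xs \<le> real (W - 1) / p + real d + p * real T"
    using alg_bound[OF assms(1,2), of H W "[]" H W h d xs] assms by (simp add: st_def)
qed



fun xs_of :: "(bool list \<Rightarrow> 'x) \<Rightarrow> bool list \<Rightarrow> bool list \<Rightarrow> 'x list" where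
  "xs_of X u [] = []"
| "xs_of X u (b # s) = X u # xs_of X (u @ [b]) s"

lemma length_xs_of[simp]: "length (xs_of X u s) = length s"
  by (induction s arbitrary: u) auto

lemma lists_Suc: "{s :: bool list. length s = Suc n} = (Cons True) ` {s. length s = n} \<union> (Cons False) ` {s. length s = n}"
proof -
  have "\<And>s::bool list. length s = Suc n \<Longrightarrow> s \<in> (Cons True) ` {s. length s = n} \<union> (Cons False) ` {s. length s = n}"
  proof -
    fix s :: "bool list" assume "length s = Suc n"
    then obtain b t where "s = b # t" "length t = n" by (cases s) auto
    then show "s \<in> (Cons True) ` {s. length s = n} \<union> (Cons False) ` {s. length s = n}" by (cases b) auto
  qed
  then show ?thesis by auto
qed

lemma sum_lists_Suc:
  fixes f :: "bool list \<Rightarrow> real"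
  shows "(\<Sum>s\<in>{s. length s = Suc n}. f s) = (\<Sum>s\<in>{s. length s = n}. f (True # s)) + (\<Sum>s\<in>{s. length s = n}. f (False # s))"
proof -
  have fin: "finite {s :: bool list. length s = n}" using finite_lists_length_eq[of "UNIV :: bool set" n] by simp
  have "(\<Sum>s\<in>{s. length s = Suc n}. f s) = (\<Sum>s\<in>(Cons True) ` {s. length s = n}. f s) + (\<Sum>s\<in>(Cons False) ` {s. length s = n}. f s)"
    unfolding lists_Suc by (rule sum.union_disjoint) (use fin in auto)
  also have "\<dots> = (\<Sum>s\<in>{s. length s = n}. f (True # s)) + (\<Sum>s\<in>{s. length s = n}. f (False # s))"
    by (subst sum.reindex, simp add: inj_on_def)+ simp
  finally show ?thesis .
qed

lemma tree_lower:
  assumes A: "valid_learner A"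
  shows "(\<forall>s. length s = n \<longrightarrow> (\<forall>i<n. g s (X (u @ take i s)) = s ! i)) \<Longrightarrow>
    (\<Sum>s\<in>{s. length s = n}. exp_mistakes A (g s) hs (xs_of X u s)) \<ge> 2 ^ n * real n / 2"
proof (induction n arbitrary: u hs g)
  case 0 then show ?case using em_nonneg[OF A] by (simp add: sum_nonneg)
next
  case (Suc n)
  let ?a = "A hs (X u)"
  have a: "0 \<le> ?a" "?a \<le> 1" using A by (auto simp: valid_learner_def)
  define S where "S = {s :: bool list. length s = n}"
  have lab: "g (b # s) (X u) = b" if "length s = n" for b :: bool and s :: "bool list"
    using Suc.prems[rule_format, of "b # s" 0] that by simp
  have labg: "\<forall>s. length s = n \<longrightarrow> (\<forall>i<n. g (b # s) (X ((u @ [b]) @ take i s)) = s ! i)" for b :: bool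
  proof (intro allI impI)
    fix s :: "bool list" and i :: nat assume "length s = n" "i < n"
    then have "g (b # s) (X (u @ take (Suc i) (b # s))) = (b # s) ! Suc i"
      using Suc.prems[rule_format, of "b # s" "Suc i"] by simp
    then show "g (b # s) (X ((u @ [b]) @ take i s)) = s ! i" by simp
  qed
  define E1 where "E1 b = (\<Sum>s\<in>S. exp_mistakes A (g (b # s)) (hs @ [(X u, True, Some b)]) (xs_of X (u @ [b]) s))" for b
  define E0 where "E0 b = (\<Sum>s\<in>S. exp_mistakes A (g (b # s)) (hs @ [(X u, False, None)]) (xs_of X (u @ [b]) s))" for b
  have IH1: "E1 b \<ge> 2 ^ n * real n / 2" for b unfolding E1_def S_def by (rule Suc.IH[OF labg])
  have IH0: "E0 b \<ge> 2 ^ n * real n / 2" for b unfolding E0_def S_def by (rule Suc.IH[OF labg])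
  have cS: "card S = 2 ^ n" unfolding S_def using card_lists_length_eq[of "UNIV :: bool set" n] by simp
  have step: "(\<Sum>s\<in>S. exp_mistakes A (g (b # s)) hs (xs_of X u (b # s))) =
     ?a * ((if b then 0 else 1) * 2 ^ n + E1 b) + (1 - ?a) * ((if b then 1 else 0) * 2 ^ n + E0 b)" for b
  proof -
    have "(\<Sum>s\<in>S. exp_mistakes A (g (b # s)) hs (xs_of X u (b # s))) =
      (\<Sum>s\<in>S. ?a * ((if b then 0 else 1) + exp_mistakes A (g (b # s)) (hs @ [(X u, True, Some b)]) (xs_of X (u @ [b]) s))
        + (1 - ?a) * ((if b then 1 else 0) + exp_mistakes A (g (b # s)) (hs @ [(X u, False, None)]) (xs_of X (u @ [b]) s)))"
      by (rule sum.cong) (simp_all add: S_def lab)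
    also have "\<dots> = ?a * ((if b then 0 else 1) * card S + E1 b) + (1 - ?a) * ((if b then 1 else 0) * card S + E0 b)"
      by (simp add: sum.distrib sum_distrib_left[symmetric] E1_def E0_def)
    finally show ?thesis using cS by simp
  qed
  have "(\<Sum>s\<in>{s. length s = Suc n}. exp_mistakes A (g s) hs (xs_of X u s)) =
      (\<Sum>s\<in>S. exp_mistakes A (g (True # s)) hs (xs_of X u (True # s))) + (\<Sum>s\<in>S. exp_mistakes A (g (False # s)) hs (xs_of X u (False # s)))"
    unfolding S_def by (rule sum_lists_Suc)
  also have "\<dots> = ?a * E1 True + (1 - ?a) * (2 ^ n + E0 True) + (?a * (2 ^ n + E1 False) + (1 - ?a) * E0 False)"
    using step[of True] step[of False] by simp
  also have "\<dots> \<ge> ?a * (2 ^ n * real n / 2) + (1 - ?a) * (2 ^ n + 2 ^ n * real n / 2) + (?a * (2 ^ n + 2 ^ n * real n / 2) + (1 - ?a) * (2 ^ n * real n / 2))"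
    using a IH1 IH0 by (intro add_mono mult_left_mono) auto
  also have "?a * (2 ^ n * real n / 2) + (1 - ?a) * (2 ^ n + 2 ^ n * real n / 2) + (?a * (2 ^ n + 2 ^ n * real n / 2) + (1 - ?a) * (2 ^ n * real n / 2))
     = 2 ^ Suc n * real (Suc n) / 2" by (simp add: algebra_simps)
  finally show ?case .
qed

lemma littlestone_lower:
  assumes A: "valid_learner A" and shat: "\<And>s. length s = T \<Longrightarrow> (\<exists>h\<in>H. \<forall>i<T. h (X (take i s)) = s ! i)"
  shows "real T / 2 \<le> mistake_bound A T H"
proof -
  define g where "g s = (SOME h. h \<in> H \<and> (\<forall>i<T. h (X (take i s)) = s ! i))" for s
  have g: "g s \<in> H \<and> (\<forall>i<T. g s (X (take i s)) = s ! i)" if "length s = T" for s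
  proof -
    have "\<exists>h. h \<in> H \<and> (\<forall>i<T. h (X (take i s)) = s ! i)" using shat[OF that] by blast
    then show ?thesis unfolding g_def by (rule someI_ex)
  qed
  define S where "S = {s :: bool list. length s = T}"
  have cS: "card S = 2 ^ T" unfolding S_def using card_lists_length_eq[of "UNIV :: bool set" T] by simp
  have pre: "\<forall>s. length s = T \<longrightarrow> (\<forall>i<T. g s (X ([] @ take i s)) = s ! i)"
    using g by simp
  have "2 ^ T * real T / 2 \<le> (\<Sum>s\<in>S. exp_mistakes A (g s) [] (xs_of X [] s))"
    unfolding S_def by (rule tree_lower[OF A pre])
  also have "\<dots> \<le> (\<Sum>s\<in>S. mistake_bound A T H)"
  proof (rule sum_mono)
    fix s assume "s \<in> S"
    then have "length s = T" by (simp add: S_def)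
    then show "exp_mistakes A (g s) [] (xs_of X [] s) \<le> mistake_bound A T H"
      using g[of s] mb_upper[OF A, of "g s" H "xs_of X [] s" T] by simp
  qed
  also have "\<dots> = 2 ^ T * mistake_bound A T H" using cS by simp
  finally show ?thesis by simp
qed



lemma expand_false:
  assumes "\<And>k. k \<in> K \<Longrightarrow> f k y0 = False"
  shows "(\<Sum>k\<in>K. c k * exp_mistakes A (f k) hs (y0 # rest)) =
    A hs y0 * (sum c K + (\<Sum>k\<in>K. c k * exp_mistakes A (f k) (hs @ [(y0, True, Some False)]) rest))
    + (1 - A hs y0) * (\<Sum>k\<in>K. c k * exp_mistakes A (f k) (hs @ [(y0, False, None)]) rest)"
proof -
  have "(\<Sum>k\<in>K. c k * exp_mistakes A (f k) hs (y0 # rest)) =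
    (\<Sum>k\<in>K. A hs y0 * (c k + c k * exp_mistakes A (f k) (hs @ [(y0, True, Some False)]) rest)
      + (1 - A hs y0) * (c k * exp_mistakes A (f k) (hs @ [(y0, False, None)]) rest))"
    by (rule sum.cong) (simp_all add: assms algebra_simps)
  also have "\<dots> = A hs y0 * (sum c K + (\<Sum>k\<in>K. c k * exp_mistakes A (f k) (hs @ [(y0, True, Some False)]) rest))
    + (1 - A hs y0) * (\<Sum>k\<in>K. c k * exp_mistakes A (f k) (hs @ [(y0, False, None)]) rest)"
    by (simp add: sum.distrib sum_distrib_left distrib_left)
  finally show ?thesis .
qed

lemma lemmaC:
  assumes A: "valid_learner A" and fk: "\<And>k. k \<in> K \<Longrightarrow> f k y0 = False"
    and c: "\<And>k. k \<in> K \<Longrightarrow> 0 \<le> c k"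
    and base: "\<And>hs. B \<le> (\<Sum>k\<in>K. c k * exp_mistakes A (f k) hs S)"
  shows "B \<le> (\<Sum>k\<in>K. c k * exp_mistakes A (f k) hs (replicate r y0 @ S))"
proof (induction r arbitrary: hs)
  case 0 then show ?case using base by simp
next
  case (Suc r)
  let ?a = "A hs y0"
  have a: "0 \<le> ?a" "?a \<le> 1" using A by (auto simp: valid_learner_def)
  have sc: "0 \<le> sum c K" using c by (simp add: sum_nonneg)
  have "(\<Sum>k\<in>K. c k * exp_mistakes A (f k) hs (replicate (Suc r) y0 @ S)) =
    ?a * (sum c K + (\<Sum>k\<in>K. c k * exp_mistakes A (f k) (hs @ [(y0, True, Some False)]) (replicate r y0 @ S)))
    + (1 - ?a) * (\<Sum>k\<in>K. c k * exp_mistakes A (f k) (hs @ [(y0, False, None)]) (replicate r y0 @ S))"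
    using expand_false[of K f y0 c A hs "replicate r y0 @ S", OF fk] by simp
  also have "\<dots> \<ge> ?a * (0 + B) + (1 - ?a) * B"
    using a sc Suc.IH by (intro add_mono mult_left_mono) auto
  finally show ?case by (simp add: algebra_simps)
qed

definition seqc :: "(nat \<Rightarrow> 'x) \<Rightarrow> nat \<Rightarrow> nat \<Rightarrow> nat \<Rightarrow> 'x list" where
  "seqc y n d j = concat (map (\<lambda>i. replicate n (y i)) [j..<d])"

definition wt :: "nat \<Rightarrow> nat \<Rightarrow> nat \<Rightarrow> real" where
  "wt n d k = (if k = d then 1 else 1 / real n)"

lemma wt_nonneg: "0 \<le> wt n d k" by (simp add: wt_def)

lemma seqc_step: "j < d \<Longrightarrow> seqc y n d j = replicate n (y j) @ seqc y n d (Suc j)"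
  by (simp add: seqc_def upt_conv_Cons)

lemma seqc_len: "length (seqc y n d 0) = d * n"
  by (simp add: seqc_def length_concat o_def sum_list_triv)

lemma lemmaB:
  assumes A: "valid_learner A" and n: "n \<ge> 1" and j: "j < d"
    and cf1: "\<And>k i. k < d \<Longrightarrow> i < k \<Longrightarrow> f k (y i) = False"
    and cf2: "\<And>k. k < d \<Longrightarrow> f k (y k) = True"
    and cf3: "\<And>i. i < d \<Longrightarrow> f d (y i) = False"
    and Lnext: "\<And>hs. real (d - j - 1) \<le> (\<Sum>k\<in>{Suc j..d}. wt n d k * exp_mistakes A (f k) hs (seqc y n d (Suc j)))"
  shows "r \<le> n \<Longrightarrow> real r / real n + real (d - j - 1) \<le>
     (\<Sum>k\<in>{j..d}. wt n d k * exp_mistakes A (f k) hs (replicate r (y j) @ seqc y n d (Suc j)))"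
proof (induction r arbitrary: hs)
  let ?S = "seqc y n d (Suc j)"
  let ?D = "real (d - j - 1)"
  let ?K = "{Suc j..d}"
  have splitK: "(\<Sum>k\<in>{j..d}. wt n d k * exp_mistakes A (f k) hs' xs) =
      (1 / real n) * exp_mistakes A (f j) hs' xs + (\<Sum>k\<in>?K. wt n d k * exp_mistakes A (f k) hs' xs)" for hs' xs
  proof -
    have "{j..d} = insert j ?K" using j by auto
    then show ?thesis using j by (simp add: wt_def)
  qed
  {
    case 0
    have "0 \<le> exp_mistakes A (f j) hs ?S" by (rule em_nonneg[OF A])
    then have "0 \<le> (1 / real n) * exp_mistakes A (f j) hs ?S" by simp
    then show ?case using Lnext[of hs] splitK[of hs ?S] by simp
  next
    case (Suc r)
    let ?a = "A hs (y j)"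
    let ?rest = "replicate r (y j) @ ?S"
    define hs1 where "hs1 = hs @ [(y j, True, Some False)]"
    define hs1' where "hs1' = hs @ [(y j, True, Some True)]"
    define hs0 where "hs0 = hs @ [(y j, False, None)]"
    have a: "0 \<le> ?a" "?a \<le> 1" using A by (auto simp: valid_learner_def)
    have fK: "f k (y j) = False" if "k \<in> ?K" for k
    proof (cases "k = d")
      case True then show ?thesis using cf3 j by simp
    next
      case False then show ?thesis using cf1 that by simp
    qed
    define R1 where "R1 = (\<Sum>k\<in>?K. wt n d k * exp_mistakes A (f k) hs1 ?rest)"
    define R0 where "R0 = (\<Sum>k\<in>?K. wt n d k * exp_mistakes A (f k) hs0 ?rest)"
    define E1 where "E1 = exp_mistakes A (f j) hs1' ?rest"
    define E0 where "E0 = exp_mistakes A (f j) hs0 ?rest"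
    define sw where "sw = sum (wt n d) ?K"
    have exK: "(\<Sum>k\<in>?K. wt n d k * exp_mistakes A (f k) hs (y j # ?rest)) = ?a * (sw + R1) + (1 - ?a) * R0"
      unfolding R1_def R0_def sw_def hs1_def hs0_def by (rule expand_false[of ?K f "y j"]) (rule fK)
    have exj: "exp_mistakes A (f j) hs (y j # ?rest) = ?a * E1 + (1 - ?a) * (1 + E0)"
      using cf2[OF j] by (simp add: E1_def E0_def hs1'_def hs0_def)
    have tot: "(\<Sum>k\<in>{j..d}. wt n d k * exp_mistakes A (f k) hs (replicate (Suc r) (y j) @ ?S))
       = (1 / real n) * (?a * E1 + (1 - ?a) * (1 + E0)) + (?a * (sw + R1) + (1 - ?a) * R0)"
      using splitK[of hs "y j # ?rest"] exK exj by simp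
    have sw1: "1 \<le> sw"
    proof -
      have "wt n d d \<le> sw" unfolding sw_def by (rule member_le_sum) (use j wt_nonneg in auto)
      then show ?thesis by (simp add: wt_def)
    qed
    have R1b: "?D \<le> R1" unfolding R1_def
      by (rule lemmaC[OF A fK wt_nonneg Lnext])
    have IH: "real r / real n + ?D \<le> (1 / real n) * E0 + R0"
      using Suc.IH[of hs0] Suc.prems splitK[of hs0 ?rest] by (simp add: E0_def R0_def)
    have E1p: "0 \<le> E1" unfolding E1_def by (rule em_nonneg[OF A])
    have np: "0 < real n" using n by simp
    have rn: "real (Suc r) / real n \<le> 1" using Suc.prems np by (simp add: divide_le_eq)
    have "(1 / real n) * (?a * E1 + (1 - ?a) * (1 + E0)) + (?a * (sw + R1) + (1 - ?a) * R0)
        = ?a * ((1 / real n) * E1 + sw + R1) + (1 - ?a) * (1 / real n + ((1 / real n) * E0 + R0))"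
      by (simp add: algebra_simps)
    also have "\<dots> \<ge> ?a * (0 + 1 + ?D) + (1 - ?a) * (1 / real n + (real r / real n + ?D))"
    proof -
      have "0 \<le> (1 / real n) * E1" using E1p np by simp
      then have "0 + 1 + ?D \<le> (1 / real n) * E1 + sw + R1" using sw1 R1b by linarith
      then have X1: "?a * (0 + 1 + ?D) \<le> ?a * ((1 / real n) * E1 + sw + R1)"
        using a by (intro mult_left_mono) auto
      have "1 / real n + (real r / real n + ?D) \<le> 1 / real n + ((1 / real n) * E0 + R0)" using IH by linarith
      then have X2: "(1 - ?a) * (1 / real n + (real r / real n + ?D)) \<le> (1 - ?a) * (1 / real n + ((1 / real n) * E0 + R0))"
        using a by (intro mult_left_mono) auto
      show ?thesis using X1 X2 by linarith
    qed
    also have "?a * (0 + 1 + ?D) + (1 - ?a) * (1 / real n + (real r / real n + ?D))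
       = real (Suc r) / real n + ?D + ?a * (1 - real (Suc r) / real n)"
      by (simp add: algebra_simps add_divide_distrib)
    also have "\<dots> \<ge> real (Suc r) / real n + ?D"
      using a rn by simp
    finally show ?case using tot by simp
  }
qed

lemma lemmaL:
  assumes A: "valid_learner A" and n: "n \<ge> 1"
    and cf1: "\<And>k i. k < d \<Longrightarrow> i < k \<Longrightarrow> f k (y i) = False"
    and cf2: "\<And>k. k < d \<Longrightarrow> f k (y k) = True"
    and cf3: "\<And>i. i < d \<Longrightarrow> f d (y i) = False"
  shows "m \<le> d \<Longrightarrow> real m \<le> (\<Sum>k\<in>{d - m..d}. wt n d k * exp_mistakes A (f k) hs (seqc y n d (d - m)))"
proof (induction m arbitrary: hs)
  case 0
  then show ?case by (simp add: seqc_def)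
next
  case (Suc m)
  define j where "j = d - Suc m"
  have j: "j < d" "Suc j = d - m" "d - j - 1 = m" using Suc.prems by (auto simp: j_def)
  have Lnext: "real (d - j - 1) \<le> (\<Sum>k\<in>{Suc j..d}. wt n d k * exp_mistakes A (f k) hs' (seqc y n d (Suc j)))" for hs'
    using Suc.IH[of hs'] Suc.prems j by simp
  have "real n / real n + real (d - j - 1) \<le>
     (\<Sum>k\<in>{j..d}. wt n d k * exp_mistakes A (f k) hs (replicate n (y j) @ seqc y n d (Suc j)))"
    by (rule lemmaB[OF A n j(1) cf1 cf2 cf3 Lnext]) auto
  then show ?case using n j seqc_step[OF j(1), of y n] by (simp add: j_def)
qed

lemma chain_lower:
  assumes A: "valid_learner A" and n: "n \<ge> 1"
    and cf1: "\<And>k i. k < d \<Longrightarrow> i < k \<Longrightarrow> f k (y i) = False"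
    and cf2: "\<And>k. k < d \<Longrightarrow> f k (y k) = True"
    and cf3: "\<And>i. i < d \<Longrightarrow> f d (y i) = False"
    and fH: "\<And>k. k \<le> d \<Longrightarrow> f k \<in> H" and T: "d * n \<le> T"
  shows "real d \<le> (1 + real d / real n) * mistake_bound A T H"
proof -
  define xs where "xs = seqc y n d 0 @ replicate (T - d * n) (y 0)"
  have lx: "length xs = T" using T by (simp add: xs_def seqc_len)
  have "real d \<le> (\<Sum>k\<in>{0..d}. wt n d k * exp_mistakes A (f k) [] (seqc y n d 0))"
    using lemmaL[where A=A and n=n and d=d and f=f and y=y and m=d and hs="[]", OF A n cf1 cf2 cf3] by simp
  also have "\<dots> \<le> (\<Sum>k\<in>{0..d}. wt n d k * mistake_bound A T H)"
  proof (rule sum_mono)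
    fix k assume k: "k \<in> {0..d}"
    have "exp_mistakes A (f k) [] (seqc y n d 0) \<le> exp_mistakes A (f k) [] xs"
      unfolding xs_def by (rule em_append_mono[OF A])
    also have "\<dots> \<le> mistake_bound A T H" using mb_upper[OF A fH lx] k by simp
    finally show "wt n d k * exp_mistakes A (f k) [] (seqc y n d 0) \<le> wt n d k * mistake_bound A T H"
      by (rule mult_left_mono) (rule wt_nonneg)
  qed
  also have "\<dots> = (\<Sum>k\<in>{0..d}. wt n d k) * mistake_bound A T H" by (simp add: sum_distrib_right)
  also have "(\<Sum>k\<in>{0..d}. wt n d k) = 1 + real d / real n"
  proof -
    have "{0..d} = insert d {0..<d}" by auto
    then have "(\<Sum>k\<in>{0..d}. wt n d k) = wt n d d + (\<Sum>k\<in>{0..<d}. wt n d k)" by simp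
    also have "(\<Sum>k\<in>{0..<d}. wt n d k) = (\<Sum>k\<in>{0..<d}. 1 / real n)" by (rule sum.cong) (auto simp: wt_def)
    finally show ?thesis by (simp add: wt_def)
  qed
  finally show ?thesis .
qed



lemma eff_width_fin:
  assumes "eff_width H = enat w"
  shows "1 \<le> w \<and> AL_dim w H < \<infinity>"
proof -
  define S where "S = {enat w |w. 1 \<le> w \<and> AL_dim w H < \<infinity>}"
  have ew: "eff_width H = Inf S" unfolding eff_width_def S_def by (rule refl)
  have ne: "S \<noteq> {}"
  proof
    assume e: "S = {}"
    have "Inf S = \<infinity>" unfolding e by (simp add: top_enat_def)
    then show False using assms ew by simp
  qed
  have "Inf S = (LEAST x. x \<in> S)" unfolding Inf_enat_def using ne by (rule if_not_P)
  moreover have "(LEAST x. x \<in> S) \<in> S" using ne by (metis LeastI_ex ex_in_conv)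
  ultimately have "enat w \<in> S" using assms ew by (rule_tac subst[of "Inf S"]) auto
  then show ?thesis unfolding S_def by blast
qed


lemma eff_width_le:
  assumes "1 \<le> w" "AL_dim w H < \<infinity>"
  shows "eff_width H \<le> enat w"
  unfolding eff_width_def by (rule Inf_lower) (use assms in blast)

lemma nonempty_of_inf: "AL_dim w H = \<infinity> \<Longrightarrow> H \<noteq> {}"
proof -
  assume "AL_dim w H = \<infinity>"
  then obtain X where "AL_shattered H w 0 X" using dim_inf_ex by blast
  moreover have "is_path w 0 []" by (simp add: is_path_def internal_node_def)
  ultimately show "H \<noteq> {}" unfolding AL_shattered_def by blast
qed

lemma opt_nonneg: "H \<noteq> {} \<Longrightarrow> 0 \<le> opt_mistakes T H"
  by (rule opt_ge) (rule mb_nonneg)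

lemma upper_fin:
  assumes "H \<noteq> {}" "W \<ge> 1" "AL_dim W H = enat d" "0 < p" "p \<le> 1"
  shows "opt_mistakes T H \<le> real (W - 1) / p + real d + p * real T"
proof -
  have v: "valid_learner (alg H W p)" by (intro valid_alg) (use assms in auto)
  show ?thesis by (rule order_trans[OF opt_le[OF v assms(1)] alg_mb[OF assms(4,5,1,2,3)]])
qed

lemma upper_triv:
  assumes "H \<noteq> {}"
  shows "opt_mistakes T H \<le> real T"
proof -
  have "mistake_bound (\<lambda>_ _. 0) T H \<le> real T"
    by (rule mb_least[OF assms]) (use em_le_len[OF valid_zero] in auto)
  then show ?thesis by (rule order_trans[OF opt_le[OF valid_zero assms]])
qed


lemma take_rep1: "i \<le> k \<Longrightarrow> take i (replicate k False @ [True]) = replicate i False"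
  by simp

lemma path_chain1: "k < d \<Longrightarrow> is_path 1 d (replicate k False @ [True])"
  unfolding is_path_def internal_node_def by (auto simp: take_rep1 less_Suc_eq_le)

lemma path_chain2: "is_path 1 d (replicate d False)"
  unfolding is_path_def internal_node_def by (auto simp: min_def)


lemma chain_from_tree:
  assumes "AL_shattered H 1 d X"
  shows "\<exists>f. (\<forall>k i. k < d \<longrightarrow> i < k \<longrightarrow> f k (X (replicate i False)) = False)
     \<and> (\<forall>k. k < d \<longrightarrow> f k (X (replicate k False)) = True)
     \<and> (\<forall>i. i < d \<longrightarrow> f d (X (replicate i False)) = False)
     \<and> (\<forall>k. k \<le> d \<longrightarrow> f k \<in> H)"
proof -
  define \<sigma> where "\<sigma> k = (if k < d then replicate k False @ [True] else replicate d False)" for k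
  have p: "is_path 1 d (\<sigma> k)" if "k \<le> d" for k
    using path_chain1[of k d] path_chain2[of d] that by (auto simp: \<sigma>_def)
  define f where "f k = (SOME h. h \<in> H \<and> (\<forall>i<length (\<sigma> k). h (X (take i (\<sigma> k))) = \<sigma> k ! i))" for k
  have f: "f k \<in> H \<and> (\<forall>i<length (\<sigma> k). f k (X (take i (\<sigma> k))) = \<sigma> k ! i)" if "k \<le> d" for k
  proof -
    have "\<exists>h. h \<in> H \<and> (\<forall>i<length (\<sigma> k). h (X (take i (\<sigma> k))) = \<sigma> k ! i)"
      using assms p[OF that] unfolding AL_shattered_def by blast
    then show ?thesis unfolding f_def by (rule someI_ex)
  qed
  have c1: "f k (X (replicate i False)) = False" if "k < d" "i < k" for k i
  proof -
    have "f k (X (take i (\<sigma> k))) = \<sigma> k ! i" using f[of k] that by (auto simp: \<sigma>_def)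
    then show ?thesis using that by (simp add: \<sigma>_def nth_append)
  qed
  have c2: "f k (X (replicate k False)) = True" if "k < d" for k
  proof -
    have "f k (X (take k (\<sigma> k))) = \<sigma> k ! k" using f[of k] that by (auto simp: \<sigma>_def)
    then show ?thesis using that by (simp add: \<sigma>_def nth_append)
  qed
  have c3: "f d (X (replicate i False)) = False" if "i < d" for i
  proof -
    have "f d (X (take i (\<sigma> d))) = \<sigma> d ! i" using f[of d] that by (auto simp: \<sigma>_def)
    then show ?thesis using that by (simp add: \<sigma>_def)
  qed
  show ?thesis using c1 c2 c3 f by blast
qed


lemma sqrt_lower:
  assumes inf1: "AL_dim 1 H = \<infinity>" and T: "T \<ge> 1"
  shows "real (nat \<lfloor>sqrt (real T)\<rfloor>) / 2 \<le> opt_mistakes T H"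
proof (rule opt_ge)
  fix A :: "'a learner" assume A: "valid_learner A"
  define d where "d = nat \<lfloor>sqrt (real T)\<rfloor>"
  have d1: "d \<ge> 1" using T by (simp add: d_def le_nat_floor)
  have "real d \<le> sqrt (real T)" using T by (simp add: d_def)
  then have "real d * real d \<le> sqrt (real T) * sqrt (real T)" by (intro mult_mono) auto
  then have "real (d * d) \<le> real T" by simp
  then have dT: "d * d \<le> T" by linarith
  obtain X where X: "AL_shattered H 1 d X" using dim_inf_ex[OF inf1] by blast
  obtain f where f: "\<forall>k i. k < d \<longrightarrow> i < k \<longrightarrow> f k (X (replicate i False)) = False"
     "\<forall>k. k < d \<longrightarrow> f k (X (replicate k False)) = True"
     "\<forall>i. i < d \<longrightarrow> f d (X (replicate i False)) = False"
     "\<forall>k. k \<le> d \<longrightarrow> f k \<in> H"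
    using chain_from_tree[OF X] by blast
  have e: "real d \<le> (1 + real d / real d) * mistake_bound A T H"
    by (rule chain_lower[where y="\<lambda>i. X (replicate i False)" and f=f and d=d and n=d and T=T, OF A d1]) (use f dT in auto)
  have "real d / real d = 1" using d1 by simp
  then have "real d \<le> 2 * mistake_bound A T H" using e by simp
  then show "real (nat \<lfloor>sqrt (real T)\<rfloor>) / 2 \<le> mistake_bound A T H" unfolding d_def[symmetric] by simp
qed

lemma linear_lower:
  assumes inf: "\<And>w. w \<ge> 1 \<Longrightarrow> AL_dim w H = \<infinity>"
  shows "real T / 2 \<le> opt_mistakes T H"
proof (rule opt_ge)
  fix A :: "'a learner" assume A: "valid_learner A"
  obtain X where X: "AL_shattered H (Suc T) T X" using dim_inf_ex[OF inf[of "Suc T"]] by auto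
  have "\<exists>h\<in>H. \<forall>i<T. h (X (take i s)) = s ! i" if "length s = T" for s
  proof -
    have "is_path (Suc T) T s" unfolding is_path_def
    proof (intro conjI allI impI)
      fix i assume i: "i < length s"
      have "length (filter id (take i s)) \<le> length (take i s)" by (rule length_filter_le)
      then show "internal_node (Suc T) T (take i s)" using i that by (simp add: internal_node_def)
    next
      show "\<not> internal_node (Suc T) T s" using that by (simp add: internal_node_def)
    qed
    then show ?thesis using X that unfolding AL_shattered_def by auto
  qed
  then show "real T / 2 \<le> mistake_bound A T H" by (rule littlestone_lower[OF A])
qed



lemma opt_empty: "opt_mistakes T ({} :: ('x \<Rightarrow> bool) set) = opt_mistakes 0 ({} :: ('x \<Rightarrow> bool) set)"
  by (simp add: opt_mistakes_def mistake_bound_def)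

lemma case1:
  assumes "eff_width H = 1"
  shows "(\<lambda>T. opt_mistakes T H) \<in> O(\<lambda>T. 1)"
proof (cases "H = {}")
  case True
  show ?thesis
  proof (rule bigoI[where c="\<bar>opt_mistakes 0 H\<bar>"])
    show "\<forall>\<^sub>F x in at_top. norm (opt_mistakes x H) \<le> \<bar>opt_mistakes 0 H\<bar> * norm (1::real)"
    proof (intro always_eventually allI)
      fix x :: nat
      have "opt_mistakes x H = opt_mistakes 0 H" using True opt_empty[of x] by simp
      then show "norm (opt_mistakes x H) \<le> \<bar>opt_mistakes 0 H\<bar> * norm (1::real)" by simp
    qed
  qed
next
  case False
  have "eff_width H = enat 1" using assms by (simp add: one_enat_def)
  then have "AL_dim 1 H < \<infinity>" using eff_width_fin by blast
  then obtain d0 where d0: "AL_dim 1 H = enat d0" by (cases "AL_dim 1 H") auto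
  show ?thesis
  proof (rule bigoI[where c="real d0 + 1"])
    show "\<forall>\<^sub>F x in at_top. norm (opt_mistakes x H) \<le> (real d0 + 1) * norm (1::real)"
    proof (intro always_eventually allI)
      fix T :: nat
      define p where "p = 1 / (real T + 1)"
      have p: "0 < p" "p \<le> 1" by (auto simp: p_def)
      have "opt_mistakes T H \<le> real (1 - 1) / p + real d0 + p * real T"
        by (rule upper_fin[OF False _ d0 p]) simp
      also have "p * real T \<le> 1" by (simp add: p_def)
      finally have "opt_mistakes T H \<le> real d0 + 1" by simp
      then show "norm (opt_mistakes T H) \<le> (real d0 + 1) * norm (1::real)"
        using opt_nonneg[OF False, of T] by simp
    qed
  qed
qed

lemma case2:
  assumes "2 \<le> eff_width H" "eff_width H < \<infinity>"
  shows "(\<lambda>T. opt_mistakes T H) \<in> \<Theta>(\<lambda>T. sqrt (real T))"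
proof -
  obtain w where w: "eff_width H = enat w" using assms(2) by (cases "eff_width H") auto
  have w1: "1 \<le> w" and "AL_dim w H < \<infinity>" using eff_width_fin[OF w] by auto
  then obtain d0 where d0: "AL_dim w H = enat d0" by (cases "AL_dim w H") auto
  have inf1: "AL_dim 1 H = \<infinity>"
  proof (rule ccontr)
    assume "AL_dim 1 H \<noteq> \<infinity>"
    then have "eff_width H \<le> enat 1" using eff_width_le[of 1 H] by simp
    with assms(1) have "(2::enat) \<le> enat 1" by (rule order_trans)
    then show False by (simp add: one_enat_def[symmetric])
  qed
  have Hne: "H \<noteq> {}" by (rule nonempty_of_inf[OF inf1])
  show ?thesis
  proof (rule bigthetaI'[of "1/4" "real w + real d0"])
    show "0 < real w + real d0" using w1 by simp
    show "\<forall>\<^sub>F x in at_top. 1 / 4 * norm (sqrt (real x)) \<le> norm (opt_mistakes x H) \<and>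
        norm (opt_mistakes x H) \<le> (real w + real d0) * norm (sqrt (real x))"
      unfolding eventually_at_top_linorder
    proof (intro exI[of _ 4] allI impI)
      fix T :: nat assume T: "4 \<le> T"
      let ?s = "sqrt (real T)"
      have s2: "2 \<le> ?s" using T real_sqrt_le_mono[of 4 "real T"] by simp
      have on: "0 \<le> opt_mistakes T H" by (rule opt_nonneg[OF Hne])
      have low: "real (nat \<lfloor>?s\<rfloor>) / 2 \<le> opt_mistakes T H" by (rule sqrt_lower[OF inf1]) (use T in simp)
      have "?s - 1 \<le> real (nat \<lfloor>?s\<rfloor>)" using s2 by linarith
      then have L: "1 / 4 * ?s \<le> opt_mistakes T H" using low s2 by linarith
      define p where "p = 1 / ?s"
      have p: "0 < p" "p \<le> 1" using s2 T by (auto simp: p_def)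
      have "opt_mistakes T H \<le> real (w - 1) / p + real d0 + p * real T"
        by (rule upper_fin[OF Hne w1 d0 p])
      also have "real (w - 1) / p = real (w - 1) * ?s" by (simp add: p_def)
      also have "p * real T = ?s" using s2 by (simp add: p_def real_div_sqrt)
      also have "real (w - 1) * ?s + real d0 + ?s = real w * ?s + real d0" using w1 by (simp add: algebra_simps of_nat_diff)
      also have "\<dots> \<le> real w * ?s + real d0 * ?s" using s2 T by (simp add: mult_le_cancel_left1)
      finally have U: "opt_mistakes T H \<le> (real w + real d0) * ?s" by (simp add: algebra_simps)
      show "1 / 4 * norm ?s \<le> norm (opt_mistakes T H) \<and> norm (opt_mistakes T H) \<le> (real w + real d0) * norm ?s"
        using L U on by simp
    qed
  qed simp
qed

lemma case3:
  assumes "eff_width H = \<infinity>"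
  shows "(\<lambda>T. opt_mistakes T H) \<in> \<Theta>(\<lambda>T. real T)"
proof -
  have inf: "AL_dim w H = \<infinity>" if "w \<ge> 1" for w
  proof (rule ccontr)
    assume "AL_dim w H \<noteq> \<infinity>"
    then have "eff_width H \<le> enat w" using eff_width_le[of w H] that by simp
    then show False using assms by simp
  qed
  have Hne: "H \<noteq> {}" by (rule nonempty_of_inf[OF inf[of 1]]) simp
  show ?thesis
  proof (rule bigthetaI'[of "1/2" "1"])
    show "\<forall>\<^sub>F x in at_top. 1 / 2 * norm (real x) \<le> norm (opt_mistakes x H) \<and>
        norm (opt_mistakes x H) \<le> 1 * norm (real x)"
    proof (intro always_eventually allI)
      fix T :: nat
      have "real T / 2 \<le> opt_mistakes T H" by (rule linear_lower) (rule inf)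
      moreover have "opt_mistakes T H \<le> real T" by (rule upper_triv[OF Hne])
      ultimately show "1 / 2 * norm (real T) \<le> norm (opt_mistakes T H) \<and> norm (opt_mistakes T H) \<le> 1 * norm (real T)"
        by simp
    qed
  qed simp_all
qed

theorem corollary1:
  fixes H :: "('x \<Rightarrow> bool) set"
  shows "(eff_width H = 1 \<longrightarrow> (\<lambda>T. opt_mistakes T H) \<in> O(\<lambda>T. 1))
       \<and> (2 \<le> eff_width H \<and> eff_width H < \<infinity> \<longrightarrow>
            (\<lambda>T. opt_mistakes T H) \<in> \<Theta>(\<lambda>T. sqrt (real T)))
       \<and> (eff_width H = \<infinity> \<longrightarrow> (\<lambda>T. opt_mistakes T H) \<in> \<Theta>(\<lambda>T. real T))"
  using case1 case2 case3 by blast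


end
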